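(* Let $G$ be a scheduling game on $m$ identical machines of speed $1$ in which every job $i$ has processing-time function $p_i(t)=b_i+at$ with $b_i\ge0$ and a common rate $a>0$, and in which all machines use the SBPT (Shortest Basic Processing Time) global priority list, i.e. jobs are ordered in non-decreasing order of $b_i$ (ties broken arbitrarily). Then every pure Nash equilibrium $\sigma$ of $G$ minimizes the total processing time: $\sum_{i\in N}p_i(S_i(\sigma))\le\sum_{i\in N}p_i(S_i(\sigma'))$ for every profile $\sigma'$ of $G$.
   Context: Scheduling game: a finite set $N$ of $n$ jobs (players) and a set $M$ of $m$ machines; machine $j$ has speed $s_j>0$. With a global priority list, all machines share the same bijection $\pi:N\to\{1,\dots,n\}$, and job $u$ has higher priority than $v$ iff $\pi(u)<\pi(v)$. A profile $\sigma\in M^N$ assigns each job to a machine. On machine $j$, the jobs assigned to it, listed in increasing $\pi$-order as $i_1,i_2,\dots$, are processed without idle time: $S_{i_1}(\sigma)=0$, $C_{i_k}(\sigma)=S_{i_k}(\sigma)+p_{i_k}(S_{i_k}(\sigma))/s_j$, $S_{i_{k+1}}(\sigma)=C_{i_k}(\sigma)$. The cost of job $i$ is $C_i(\sigma)$. A pure Nash equilibrium (NE) is a profile in which no job can strictly decrease its completion time by unilaterally changing its machine. *)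

theory Defs
  imports Complex_Main
begin

fun sched :: "('j \<Rightarrow> real \<Rightarrow> real) \<Rightarrow> real \<Rightarrow> real \<Rightarrow> 'j list \<Rightarrow> ('j \<times> real) list" where
  "sched p sp t [] = []"
| "sched p sp t (i # is) = (i, t) # sched p sp (t + p i t / sp) is"

definition machine_jobs :: "'j set \<Rightarrow> ('j \<Rightarrow> nat) \<Rightarrow> ('j \<Rightarrow> 'm) \<Rightarrow> 'm \<Rightarrow> 'j list" where
  "machine_jobs N prio sigma j =
     map (inv_into N prio) (sorted_list_of_set (prio ` {k \<in> N. sigma k = j}))"

definition start_time ::
  "'j set \<Rightarrow> ('j \<Rightarrow> nat) \<Rightarrow> ('j \<Rightarrow> real \<Rightarrow> real) \<Rightarrow> ('m \<Rightarrow> real) \<Rightarrow> ('j \<Rightarrow> 'm) \<Rightarrow> 'j \<Rightarrow> real" where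
  "start_time N prio p s sigma i =
     the (map_of (sched p (s (sigma i)) 0 (machine_jobs N prio sigma (sigma i))) i)"

definition completion_time ::
  "'j set \<Rightarrow> ('j \<Rightarrow> nat) \<Rightarrow> ('j \<Rightarrow> real \<Rightarrow> real) \<Rightarrow> ('m \<Rightarrow> real) \<Rightarrow> ('j \<Rightarrow> 'm) \<Rightarrow> 'j \<Rightarrow> real" where
  "completion_time N prio p s sigma i =
     start_time N prio p s sigma i + p i (start_time N prio p s sigma i) / s (sigma i)"

definition profile :: "'j set \<Rightarrow> 'm set \<Rightarrow> ('j \<Rightarrow> 'm) \<Rightarrow> bool" where
  "profile N M sigma \<longleftrightarrow> (\<forall>i\<in>N. sigma i \<in> M)"

definition pure_NE ::
  "'j set \<Rightarrow> 'm set \<Rightarrow> ('j \<Rightarrow> nat) \<Rightarrow> ('j \<Rightarrow> real \<Rightarrow> real) \<Rightarrow> ('m \<Rightarrow> real) \<Rightarrow> ('j \<Rightarrow> 'm) \<Rightarrow> bool" where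
  "pure_NE N M prio p s sigma \<longleftrightarrow> profile N M sigma \<and>
     (\<forall>i\<in>N. \<forall>j\<in>M. \<not> completion_time N prio p s (sigma(i := j)) i < completion_time N prio p s sigma i)"

definition total_processing_time ::
  "'j set \<Rightarrow> ('j \<Rightarrow> nat) \<Rightarrow> ('j \<Rightarrow> real \<Rightarrow> real) \<Rightarrow> ('m \<Rightarrow> real) \<Rightarrow> ('j \<Rightarrow> 'm) \<Rightarrow> real" where
  "total_processing_time N prio p s sigma = (\<Sum>i\<in>N. p i (start_time N prio p s sigma i))"

end

theory Submission
  imports Defs "HOL-Library.Multiset"
begin


fun fin :: "('j \<Rightarrow> real \<Rightarrow> real) \<Rightarrow> real \<Rightarrow> real \<Rightarrow> 'j list \<Rightarrow> real" where
  "fin p sp t [] = t"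
| "fin p sp t (i # is) = fin p sp (t + p i t / sp) is"

lemma map_of_sched:
  "distinct xs \<Longrightarrow> x \<in> set xs \<Longrightarrow>
   map_of (sched p sp t xs) x = Some (fin p sp t (takeWhile (\<lambda>y. y \<noteq> x) xs))"
  by (induction xs arbitrary: t) auto

lemma fin_snoc: "fin p sp t (xs @ [y]) = fin p sp t xs + p y (fin p sp t xs) / sp"
  by (induction xs arbitrary: t) auto

lemma sorted_split:
  fixes Q :: "nat set"
  assumes "finite Q" "c \<in> Q"
  shows "sorted_list_of_set Q = sorted_list_of_set {y\<in>Q. y < c} @ c # sorted_list_of_set {y\<in>Q. c < y}"
proof -
  have e: "Q = insert c ({y\<in>Q. y < c} \<union> {y\<in>Q. c < y})" using assms by auto
  have "card Q = Suc (card {y\<in>Q. y < c} + card {y\<in>Q. c < y})"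
    apply (subst e) using assms by (simp add: card_Un_disjoint disjoint_iff)
  moreover have "sorted_list_of_set Q = sorted_list_of_set {y\<in>Q. y < c} @ c # sorted_list_of_set {y\<in>Q. c < y}
    \<longleftrightarrow> True"
    apply (subst sorted_list_of_set_unique[symmetric])
    using assms calculation by (auto simp: sorted_wrt_append)
  ultimately show ?thesis by simp
qed

lemma sorted_snoc:
  fixes Q :: "nat set"
  assumes "finite Q" "\<forall>y\<in>Q. y < c"
  shows "sorted_list_of_set (insert c Q) = sorted_list_of_set Q @ [c]"
proof -
  have "sorted_list_of_set (insert c Q) = sorted_list_of_set Q @ [c] \<longleftrightarrow> True"
    apply (subst sorted_list_of_set_unique[symmetric])
    using assms by (auto simp: sorted_wrt_append distinct_card[symmetric])
  then show ?thesis by simp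
qed

locale sg =
  fixes N :: "'j set" and prio :: "'j \<Rightarrow> nat" and b :: "'j \<Rightarrow> real" and a :: real
  assumes finN: "finite N" and bij: "bij_betw prio N {1..card N}"
    and bnn: "\<forall>i\<in>N. b i \<ge> 0" and apos: "a > 0"
begin

definition q :: real where "q = 1 + a"
definition V :: "'j set \<Rightarrow> real" where
  "V S = (\<Sum>k\<in>S. b k * q ^ card {l\<in>S. prio k < prio l})"
definition J :: "('j \<Rightarrow> 'm) \<Rightarrow> 'm \<Rightarrow> nat \<Rightarrow> 'j set" where
  "J \<tau> j p = {k\<in>N. \<tau> k = j \<and> prio k < p}"

lemma inj: "inj_on prio N" using bij by (simp add: bij_betw_def)

lemma q1: "q > 1" using apos by (simp add: q_def)

lemma V_empty[simp]: "V {} = 0" by (simp add: V_def)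

lemma V_insert:
  assumes "finite S" "z \<notin> S" "\<forall>k\<in>S. prio k < prio z"
  shows "V (insert z S) = q * V S + b z"
proof -
  have z0: "{l\<in>insert z S. prio z < prio l} = {}" using assms by auto
  have "\<And>k. k \<in> S \<Longrightarrow> {l\<in>insert z S. prio k < prio l} = insert z {l\<in>S. prio k < prio l}"
    using assms by auto
  then have "\<And>k. k \<in> S \<Longrightarrow> card {l\<in>insert z S. prio k < prio l} = Suc (card {l\<in>S. prio k < prio l})"
    using assms by simp
  then have "(\<Sum>k\<in>S. b k * q ^ card {l\<in>insert z S. prio k < prio l})
     = (\<Sum>k\<in>S. q * (b k * q ^ card {l\<in>S. prio k < prio l}))"
    by (intro sum.cong) auto
  moreover have "V (insert z S) = b z * q ^ card {l\<in>insert z S. prio z < prio l}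
      + (\<Sum>k\<in>S. b k * q ^ card {l\<in>insert z S. prio k < prio l})"
    unfolding V_def by (rule sum.insert[OF assms(1,2)])
  ultimately show ?thesis by (simp only: z0 V_def sum_distrib_left) simp
qed

lemma fin_V:
  assumes "Q \<subseteq> prio ` N"
  shows "fin (\<lambda>i t. b i + a * t) 1 0 (map (inv_into N prio) (sorted_list_of_set Q)) = V (inv_into N prio ` Q)"
proof -
  have "finite Q" using assms finN finite_subset by blast
  then show ?thesis using assms
  proof (induction Q rule: finite_linorder_max_induct)
    case empty
    then show ?case by simp
  next
    case (insert c A)
    have cN: "inv_into N prio c \<in> N" "prio (inv_into N prio c) = c"
      using insert.prems by (auto intro: inv_into_into f_inv_into_f)
    have lt: "\<forall>k\<in>inv_into N prio ` A. prio k < prio (inv_into N prio c)"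
      using insert by (auto simp: f_inv_into_f cN)
    have nin: "inv_into N prio c \<notin> inv_into N prio ` A"
      using lt by auto
    have "fin (\<lambda>i t. b i + a * t) 1 0 (map (inv_into N prio) (sorted_list_of_set (insert c A)))
      = q * V (inv_into N prio ` A) + b (inv_into N prio c)"
    proof -
      have "sorted_list_of_set (insert c A) = sorted_list_of_set A @ [c]"
        using insert by (intro sorted_snoc) auto
      then show ?thesis using insert by (simp only: map_append list.map fin_snoc) (simp add: q_def algebra_simps)
    qed
    also have "\<dots> = V (inv_into N prio ` insert c A)"
      using V_insert[OF _ nin lt] insert by simp
    finally show ?case .
  qed
qed


lemma start_time_eq:
  assumes "i \<in> N" "s (\<tau> i) = 1"
  shows "start_time N prio (\<lambda>i t. b i + a * t) s \<tau> i = V (J \<tau> (\<tau> i) (prio i))"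
proof -
  let ?Q = "prio ` {k\<in>N. \<tau> k = \<tau> i}"
  let ?inv = "inv_into N prio"
  have fQ: "finite ?Q" using finN by simp
  have cQ: "prio i \<in> ?Q" using assms by auto
  have invQ: "\<And>y. y \<in> ?Q \<Longrightarrow> ?inv y = i \<longleftrightarrow> y = prio i"
  proof -
    fix y assume "y \<in> ?Q"
    then obtain k where k: "k \<in> N" "y = prio k" by auto
    then have "?inv y = k" using inv_into_f_f[OF inj] by simp
    then show "?inv y = i \<longleftrightarrow> y = prio i" using k assms inj_onD[OF inj] by metis
  qed
  have dist: "distinct (map ?inv (sorted_list_of_set ?Q))"
    using fQ by (simp add: distinct_map) (rule inj_on_inv_into, blast)
  have iin: "i \<in> set (map ?inv (sorted_list_of_set ?Q))"
  proof -
    have "?inv (prio i) = i" using inv_into_f_f[OF inj assms(1)] .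
    then show ?thesis using fQ cQ by (metis list.set_map imageI set_sorted_list_of_set)
  qed
  have tw: "takeWhile (\<lambda>y. y \<noteq> i) (map ?inv (sorted_list_of_set ?Q))
      = map ?inv (sorted_list_of_set {y\<in>?Q. y < prio i})"
  proof -
    have "takeWhile (\<lambda>y. y \<noteq> i) (map ?inv (sorted_list_of_set ?Q))
      = map ?inv (takeWhile ((\<lambda>y. y \<noteq> i) \<circ> ?inv) (sorted_list_of_set ?Q))"
      by (simp add: takeWhile_map)
    also have "takeWhile ((\<lambda>y. y \<noteq> i) \<circ> ?inv) (sorted_list_of_set ?Q)
        = takeWhile (\<lambda>y. y \<noteq> prio i) (sorted_list_of_set ?Q)"
      by (rule takeWhile_cong) (use invQ fQ in auto)
    also have "\<dots> = sorted_list_of_set {y\<in>?Q. y < prio i}"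
    proof -
      have fl: "finite {y\<in>?Q. y < prio i}" using fQ by simp
      have "\<forall>x\<in>set (sorted_list_of_set {y\<in>?Q. y < prio i}). x \<noteq> prio i" using fl by simp
      then show ?thesis by (simp only: sorted_split[OF fQ cQ]) (simp add: takeWhile_append)
    qed
    finally show ?thesis .
  qed
  have sub: "{y\<in>?Q. y < prio i} \<subseteq> prio ` N" by auto
  have img: "?inv ` {y\<in>?Q. y < prio i} = J \<tau> (\<tau> i) (prio i)"
  proof -
    have "{y\<in>?Q. y < prio i} = prio ` J \<tau> (\<tau> i) (prio i)" by (auto simp: J_def)
    moreover have "J \<tau> (\<tau> i) (prio i) \<subseteq> N" by (auto simp: J_def)
    ultimately show ?thesis using inv_into_image_cancel[OF inj] by simp
  qed
  show ?thesis
    unfolding start_time_def machine_jobs_def assms(2)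
    by (simp only: map_of_sched[OF dist iin] tw fin_V[OF sub] img option.sel)
qed

end



lemma mset_upd:
  assumes "finite M" "j0 \<in> M" "\<forall>j\<in>M-{j0}. f j = g j"
  shows "image_mset f (mset_set M) = image_mset g (mset_set M) - {#g j0#} + {#f j0#}"
proof -
  have e: "mset_set M = add_mset j0 (mset_set (M - {j0}))" by (rule mset_set.remove[OF assms(1,2)])
  have r: "image_mset f (mset_set (M - {j0})) = image_mset g (mset_set (M - {j0}))"
  proof (rule image_mset_cong)
    fix x assume "x \<in># mset_set (M - {j0})"
    then have "x \<in> M - {j0}" using assms(1) by simp
    then show "f x = g x" using assms(3) by blast
  qed
  have "image_mset f (mset_set M) = add_mset (f j0) (image_mset g (mset_set (M - {j0})))"
    by (simp only: e image_mset_add_mset r)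
  moreover have "image_mset g (mset_set M) = add_mset (g j0) (image_mset g (mset_set (M - {j0})))"
    by (simp only: e image_mset_add_mset)
  ultimately show ?thesis by simp
qed

context sg
begin

abbreviation n where "n \<equiv> card N"

lemma prio_range: "k \<in> N \<Longrightarrow> 1 \<le> prio k \<and> prio k \<le> n"
  using bij by (auto simp: bij_betw_def)

lemma inv_props: "p \<in> {1..n} \<Longrightarrow> inv_into N prio p \<in> N \<and> prio (inv_into N prio p) = p"
proof -
  assume "p \<in> {1..n}"
  then have "p \<in> prio ` N" using bij by (simp add: bij_betw_def)
  then show ?thesis by (simp add: inv_into_into f_inv_into_f)
qed

lemma uniq: "k \<in> N \<Longrightarrow> prio k = p \<Longrightarrow> k = inv_into N prio p"
  using inv_into_f_f[OF inj] by auto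

lemma J_Suc_other:
  assumes "p \<notin> {1..n} \<or> \<tau> (inv_into N prio p) \<noteq> j"
  shows "J \<tau> j (Suc p) = J \<tau> j p"
proof -
  have "\<And>k. k \<in> N \<Longrightarrow> \<tau> k = j \<Longrightarrow> prio k \<noteq> p"
    using assms prio_range uniq by fastforce
  then show ?thesis unfolding J_def by (auto simp: less_Suc_eq)
qed

lemma J_Suc_same:
  assumes "p \<in> {1..n}"
  shows "J \<tau> (\<tau> (inv_into N prio p)) (Suc p) = insert (inv_into N prio p) (J \<tau> (\<tau> (inv_into N prio p)) p)"
proof -
  have "\<And>k. k \<in> N \<Longrightarrow> prio k = p \<Longrightarrow> k = inv_into N prio p" using uniq by blast
  then show ?thesis using inv_props[OF assms] unfolding J_def by (auto simp: less_Suc_eq)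
qed

lemma J_Suc_notin: "p \<notin> {1..n} \<Longrightarrow> J \<tau> j (Suc p) = J \<tau> j p"
  by (rule J_Suc_other) (rule disjI1)
lemma J_Suc_ne: "\<tau> (inv_into N prio p) \<noteq> j \<Longrightarrow> J \<tau> j (Suc p) = J \<tau> j p"
  by (rule J_Suc_other) (rule disjI2)

lemma J_Suc_ne': "j \<noteq> \<tau> (inv_into N prio p) \<Longrightarrow> J \<tau> j (Suc p) = J \<tau> j p"
  by (rule J_Suc_ne) auto

lemma finite_J: "finite (J \<tau> j p)" using finN by (simp add: J_def)

lemma V_J_Suc_same:
  assumes "p \<in> {1..n}"
  shows "V (J \<tau> (\<tau> (inv_into N prio p)) (Suc p)) = q * V (J \<tau> (\<tau> (inv_into N prio p)) p) + b (inv_into N prio p)"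
  unfolding J_Suc_same[OF assms]
proof (rule V_insert)
  show "finite (J \<tau> (\<tau> (inv_into N prio p)) p)" by (rule finite_J)
  show "inv_into N prio p \<notin> J \<tau> (\<tau> (inv_into N prio p)) p" using inv_props[OF assms] by (simp add: J_def)
  show "\<forall>k\<in>J \<tau> (\<tau> (inv_into N prio p)) p. prio k < prio (inv_into N prio p)"
    using inv_props[OF assms] by (simp add: J_def)
qed

lemma partial_sum:
  assumes "\<forall>i\<in>N. \<tau> i \<in> M" "finite M"
  shows "(\<Sum>i\<in>{i\<in>N. prio i < p}. b i + a * V (J \<tau> (\<tau> i) (prio i))) = (\<Sum>j\<in>M. V (J \<tau> j p))"
proof (induction p)
  case 0
  have "\<And>j. J \<tau> j 0 = {}" by (simp add: J_def)
  then show ?case by simp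
next
  case (Suc p)
  show ?case
  proof (cases "p \<in> {1..n}")
    case False
    then have "\<forall>i\<in>N. prio i \<noteq> p" using prio_range by (metis atLeastAtMost_iff)
    then have "{i\<in>N. prio i < Suc p} = {i\<in>N. prio i < p}"
      by (auto simp: less_Suc_eq)
    moreover have "\<forall>j. J \<tau> j (Suc p) = J \<tau> j p" by (intro allI J_Suc_other disjI1 False)
    ultimately show ?thesis using Suc.IH by (simp only:)
  next
    case True
    let ?z = "inv_into N prio p"
    have zN: "?z \<in> N" "prio ?z = p" using inv_props[OF True] by auto
    have zM: "\<tau> ?z \<in> M" using assms zN by auto
    have s1: "{i\<in>N. prio i < Suc p} = insert ?z {i\<in>N. prio i < p}"
      using zN by (auto simp: less_Suc_eq dest: uniq)
    have "(\<Sum>i\<in>{i\<in>N. prio i < Suc p}. b i + a * V (J \<tau> (\<tau> i) (prio i)))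
        = b ?z + a * V (J \<tau> (\<tau> ?z) p) + (\<Sum>j\<in>M. V (J \<tau> j p))"
    proof -
      have "?z \<notin> {i\<in>N. prio i < p}" using zN by simp
      then show ?thesis unfolding s1 using zN finN Suc.IH by (simp add: sum.insert)
    qed
    also have "\<dots> = (\<Sum>j\<in>M. V (J \<tau> j (Suc p)))"
    proof -
      have e1: "(\<Sum>j\<in>M. V (J \<tau> j (Suc p))) = V (J \<tau> (\<tau> ?z) (Suc p)) + (\<Sum>j\<in>M-{\<tau> ?z}. V (J \<tau> j (Suc p)))"
        by (rule sum.remove[OF assms(2) zM])
      have e2: "(\<Sum>j\<in>M-{\<tau> ?z}. V (J \<tau> j (Suc p))) = (\<Sum>j\<in>M-{\<tau> ?z}. V (J \<tau> j p))"
        by (intro sum.cong refl) (simp add: J_Suc_ne')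
      have e3: "(\<Sum>j\<in>M. V (J \<tau> j p)) = V (J \<tau> (\<tau> ?z) p) + (\<Sum>j\<in>M-{\<tau> ?z}. V (J \<tau> j p))"
        by (rule sum.remove[OF assms(2) zM])
      show ?thesis unfolding e1 e2 e3 V_J_Suc_same[OF True] by (simp add: q_def algebra_simps)
    qed
    finally show ?thesis .
  qed
qed

lemma tpt_eq:
  assumes "\<forall>i\<in>N. \<tau> i \<in> M" "finite M" "\<forall>j\<in>M. s j = 1"
  shows "total_processing_time N prio (\<lambda>i t. b i + a * t) s \<tau> = (\<Sum>j\<in>M. V (J \<tau> j (Suc n)))"
proof -
  have "total_processing_time N prio (\<lambda>i t. b i + a * t) s \<tau>
      = (\<Sum>i\<in>N. b i + a * V (J \<tau> (\<tau> i) (prio i)))"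
    unfolding total_processing_time_def
  proof (intro sum.cong refl)
    fix x assume "x \<in> N"
    then have "s (\<tau> x) = 1" using assms by auto
    then show "b x + a * start_time N prio (\<lambda>i t. b i + a * t) s \<tau> x = b x + a * V (J \<tau> (\<tau> x) (prio x))"
      using start_time_eq[OF \<open>x \<in> N\<close>, of s \<tau>] by simp
  qed
  also have "\<dots> = (\<Sum>i\<in>{i\<in>N. prio i < Suc n}. b i + a * V (J \<tau> (\<tau> i) (prio i)))"
  proof -
    have "N = {i\<in>N. prio i < Suc n}" using prio_range by (auto simp: less_Suc_eq_le)
    then show ?thesis by simp
  qed
  also have "\<dots> = (\<Sum>j\<in>M. V (J \<tau> j (Suc n)))" by (rule partial_sum[OF assms(1,2)])
  finally show ?thesis .
qed

definition greedy :: "'m set \<Rightarrow> ('j \<Rightarrow> 'm) \<Rightarrow> bool" where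
  "greedy M \<tau> \<longleftrightarrow> (\<forall>z\<in>N. \<tau> z \<in> M \<and> (\<forall>j\<in>M. V (J \<tau> (\<tau> z) (prio z)) \<le> V (J \<tau> j (prio z))))"

lemma NE_greedy:
  assumes "pure_NE N M prio (\<lambda>i t. b i + a * t) s \<sigma>" "\<forall>j\<in>M. s j = 1"
  shows "greedy M \<sigma>"
  unfolding greedy_def
proof (intro ballI conjI)
  fix z assume zN: "z \<in> N"
  show zM: "\<sigma> z \<in> M" using assms zN by (auto simp: pure_NE_def profile_def)
  fix j assume jM: "j \<in> M"
  have "\<not> completion_time N prio (\<lambda>i t. b i + a * t) s (\<sigma>(z := j)) z
          < completion_time N prio (\<lambda>i t. b i + a * t) s \<sigma> z"
    using assms zN jM by (auto simp: pure_NE_def)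
  moreover have "J (\<sigma>(z := j)) j (prio z) = J \<sigma> j (prio z)"
    by (auto simp: J_def)
  moreover have "start_time N prio (\<lambda>i t. b i + a * t) s (\<sigma>(z := j)) z = V (J (\<sigma>(z := j)) j (prio z))"
    using start_time_eq[OF zN, of s "\<sigma>(z := j)"] assms jM by simp
  moreover have "start_time N prio (\<lambda>i t. b i + a * t) s \<sigma> z = V (J \<sigma> (\<sigma> z) (prio z))"
    using start_time_eq[OF zN, of s \<sigma>] assms zM by simp
  ultimately have "(1 + a) * V (J \<sigma> (\<sigma> z) (prio z)) \<le> (1 + a) * V (J \<sigma> j (prio z))"
    unfolding completion_time_def using assms zM jM by (simp add: algebra_simps)
  then show "V (J \<sigma> (\<sigma> z) (prio z)) \<le> V (J \<sigma> j (prio z))"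
    using apos by simp
qed

definition msetL :: "'m set \<Rightarrow> ('j \<Rightarrow> 'm) \<Rightarrow> nat \<Rightarrow> real multiset" where
  "msetL M \<tau> p = image_mset (\<lambda>j. V (J \<tau> j p)) (mset_set M)"

lemma msetL_step:
  assumes "greedy M \<tau>" "finite M" "p \<in> {1..n}"
  shows "msetL M \<tau> (Suc p) = msetL M \<tau> p - {#Min (set_mset (msetL M \<tau> p))#}
            + {#q * Min (set_mset (msetL M \<tau> p)) + b (inv_into N prio p)#}"
proof -
  let ?z = "inv_into N prio p"
  have zN: "?z \<in> N" "prio ?z = p" using inv_props[OF assms(3)] by auto
  have zM: "\<tau> ?z \<in> M" and gr: "\<forall>j\<in>M. V (J \<tau> (\<tau> ?z) p) \<le> V (J \<tau> j p)"
    using assms(1) zN by (auto simp: greedy_def)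
  have setm: "set_mset (msetL M \<tau> p) = (\<lambda>j. V (J \<tau> j p)) ` M"
    using assms(2) by (simp add: msetL_def)
  have mn: "Min (set_mset (msetL M \<tau> p)) = V (J \<tau> (\<tau> ?z) p)"
    unfolding setm using zM gr assms(2) by (intro Min_eqI) auto
  have fj0: "V (J \<tau> (\<tau> ?z) (Suc p)) = q * V (J \<tau> (\<tau> ?z) p) + b ?z"
    using V_J_Suc_same[OF assms(3)] .
  have oth: "\<forall>j\<in>M-{\<tau> ?z}. V (J \<tau> j (Suc p)) = V (J \<tau> j p)"
    by (simp add: J_Suc_ne')
  have "msetL M \<tau> (Suc p) = msetL M \<tau> p - {#V (J \<tau> (\<tau> ?z) p)#} + {#V (J \<tau> (\<tau> ?z) (Suc p))#}"
    unfolding msetL_def by (rule mset_upd[OF assms(2) zM oth])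
  then show ?thesis unfolding mn fj0 .
qed

lemma msetL_eq:
  assumes "greedy M \<tau>1" "greedy M \<tau>2" "finite M"
  shows "msetL M \<tau>1 p = msetL M \<tau>2 p"
proof (induction p)
  case 0
  then show ?case by (simp add: msetL_def J_def)
next
  case (Suc p)
  show ?case
  proof (cases "p \<in> {1..n}")
    case True
    then show ?thesis using msetL_step[OF assms(1,3) True] msetL_step[OF assms(2,3) True] Suc by simp
  next
    case False
    then show ?thesis using Suc by (simp add: msetL_def J_Suc_notin)
  qed
qed

lemma greedy_tpt_eq:
  assumes "greedy M \<tau>1" "greedy M \<tau>2" "finite M" "\<forall>j\<in>M. s j = 1"
  shows "total_processing_time N prio (\<lambda>i t. b i + a * t) s \<tau>1
       = total_processing_time N prio (\<lambda>i t. b i + a * t) s \<tau>2"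
proof -
  have p1: "\<forall>i\<in>N. \<tau>1 i \<in> M" "\<forall>i\<in>N. \<tau>2 i \<in> M" using assms by (auto simp: greedy_def)
  have "\<And>\<tau>. (\<Sum>j\<in>M. V (J \<tau> j (Suc n))) = sum_mset (msetL M \<tau> (Suc n))"
    by (simp add: msetL_def sum_unfold_sum_mset)
  then show ?thesis using tpt_eq[OF p1(1) assms(3,4)] tpt_eq[OF p1(2) assms(3,4)]
      msetL_eq[OF assms(1-3)] by metis
qed

end


locale sgM = sg N prio b a for N :: "'j set" and prio b a +
  fixes M :: "'m set" and e :: "nat \<Rightarrow> 'm"
  assumes finM: "finite M" and e_bij: "bij_betw e {0..<card M} M" and Mne: "M \<noteq> {}"
    and sortedb: "\<forall>u\<in>N. \<forall>v\<in>N. prio u < prio v \<longrightarrow> b u \<le> b v"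
    and Nne: "N \<noteq> {}"
begin

abbreviation m where "m \<equiv> card M"

lemma mpos: "m > 0" using finM Mne by (simp add: card_gt_0_iff)
lemma npos: "n > 0" using finN Nne by (simp add: card_gt_0_iff)

definition rho :: "'j \<Rightarrow> 'm" where "rho k = e ((prio k - 1) mod m)"

definition beta :: "nat \<Rightarrow> real" where
  "beta x = b (inv_into N prio (min x (n - 1) + 1))"

lemma beta_nonneg: "beta x \<ge> 0"
proof -
  have "min x (n - 1) + 1 \<in> {1..n}" using npos by auto
  then show ?thesis using inv_props bnn by (simp add: beta_def)
qed

lemma beta_mono: assumes "x \<le> y" shows "beta x \<le> beta y"
proof -
  let ?u = "min x (n - 1) + 1" and ?v = "min y (n - 1) + 1"
  have u: "?u \<in> {1..n}" and v: "?v \<in> {1..n}" using npos by auto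
  have le: "?u \<le> ?v" using assms by simp
  show ?thesis
  proof (cases "?u = ?v")
    case True then show ?thesis by (simp add: beta_def)
  next
    case False
    then have "?u < ?v" using le by (meson le_neq_implies_less)
    then show ?thesis using inv_props[OF u] inv_props[OF v] sortedb unfolding beta_def by metis
  qed
qed

lemma beta_at: "P < n \<Longrightarrow> beta P = b (inv_into N prio (Suc P))"
  by (simp add: beta_def)

primrec W :: "nat \<Rightarrow> nat \<Rightarrow> real" where
  "W r 0 = 0"
| "W r (Suc c) = q * W r c + beta (r + c * m)"

lemma W_nonneg: "W r c \<ge> 0"
  by (induction c) (use q1 beta_nonneg in auto)

lemma W_mono: "x \<le> y \<Longrightarrow> W x c \<le> W y c"
proof (induction c)
  case 0 then show ?case by simp
next
  case (Suc c)
  have "q * W x c \<le> q * W y c" using Suc q1 by simp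
  moreover have "beta (x + c * m) \<le> beta (y + c * m)" using Suc.prems by (intro beta_mono) simp
  ultimately show ?case by simp
qed

lemma W_front: "W x (Suc c) = q ^ c * beta x + W (x + m) c"
proof (induction c)
  case 0 then show ?case by simp
next
  case (Suc c)
  have "W x (Suc (Suc c)) = q * W x (Suc c) + beta (x + Suc c * m)" by simp
  also have "\<dots> = q * (q ^ c * beta x + W (x + m) c) + beta (x + m + c * m)"
    using Suc by (simp add: algebra_simps)
  also have "\<dots> = q ^ Suc c * beta x + W (x + m) (Suc c)" by (simp add: algebra_simps)
  finally show ?case .
qed

lemma W_shift: "W (x + m) c \<le> W x (Suc c)"
  using W_front[of x c] beta_nonneg[of x] q1 by simp

definition A :: "nat \<Rightarrow> nat \<Rightarrow> 'j set" where
  "A r P = {k\<in>N. (prio k - 1) mod m = r \<and> prio k - 1 < P}"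

lemma V_A:
  assumes "r < m" "P \<le> n"
  shows "V (A r P) = W r (P div m + (if r < P mod m then 1 else 0))"
  using assms(2)
proof (induction P)
  case 0
  have "A r 0 = {}" by (simp add: A_def)
  then show ?case by simp
next
  case (Suc P)
  let ?z = "inv_into N prio (Suc P)"
  have zin: "Suc P \<in> {1..n}" using Suc.prems by simp
  have zN: "?z \<in> N" "prio ?z = Suc P" using inv_props[OF zin] by auto
  have uz: "\<And>k. k \<in> N \<Longrightarrow> prio k - 1 = P \<Longrightarrow> k = ?z"
  proof -
    fix k assume k: "k \<in> N" "prio k - 1 = P"
    then have "prio k = Suc P" using prio_range[OF k(1)] by arith
    then show "k = ?z" using uniq k(1) by blast
  qed
  have IH: "V (A r P) = W r (P div m + (if r < P mod m then 1 else 0))" using Suc by simp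
  show ?case
  proof (cases "P mod m = r")
    case True
    have eqA: "A r (Suc P) = insert ?z (A r P)"
      using zN True by (auto simp: A_def less_Suc_eq dest: uz)
    have "V (A r (Suc P)) = q * V (A r P) + b ?z"
      unfolding eqA
      by (rule V_insert) (use zN finN in \<open>auto simp: A_def\<close>)
    also have "b ?z = beta (r + (P div m + (if r < P mod m then 1 else 0)) * m)"
    proof -
      have "r + (P div m + (if r < P mod m then 1 else 0)) * m = P"
        using True mod_mult_div_eq[of P m] by (simp add: mult.commute)
      then show ?thesis using beta_at[of P] Suc.prems by simp
    qed
    also have "(Suc P) div m + (if r < (Suc P) mod m then 1 else 0)
        = Suc (P div m + (if r < P mod m then 1 else 0))"
    proof (cases "Suc r = m")
      case True2: True
      then have "Suc P mod m = 0" "Suc P div m = Suc (P div m)"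
        using True by (auto simp: mod_Suc div_Suc)
      then show ?thesis using True by simp
    next
      case False2: False
      then have "Suc P mod m = Suc r" "Suc P div m = P div m"
        using True assms(1) by (auto simp: mod_Suc div_Suc)
      then show ?thesis using True by simp
    qed
    ultimately show ?thesis using IH by simp
  next
    case False
    have eqA: "A r (Suc P) = A r P"
      using zN False by (auto simp: A_def less_Suc_eq dest: uz)
    have "(Suc P) div m + (if r < (Suc P) mod m then 1 else 0)
        = P div m + (if r < P mod m then 1 else 0)"
    proof (cases "Suc (P mod m) = m")
      case True2: True
      then have "Suc P mod m = 0" "Suc P div m = Suc (P div m)" "r < P mod m"
        using False assms(1) by (auto simp: mod_Suc div_Suc)
      then show ?thesis by simp
    next
      case False2: False
      then have "Suc P mod m = Suc (P mod m)" "Suc P div m = P div m"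
        by (auto simp: mod_Suc div_Suc)
      then show ?thesis using False by auto
    qed
    then show ?thesis using eqA IH by simp
  qed
qed

lemma e_inj: "i < m \<Longrightarrow> j < m \<Longrightarrow> e i = e j \<longleftrightarrow> i = j"
  using e_bij by (auto simp: bij_betw_def inj_on_def)

lemma J_rho:
  assumes "r < m" "p \<ge> 1"
  shows "J rho (e r) p = A r (p - 1)"
proof -
  have "\<And>k. k \<in> N \<Longrightarrow> e ((prio k - 1) mod m) = e r \<longleftrightarrow> (prio k - 1) mod m = r"
    using e_inj assms mpos by simp
  moreover have "\<And>k. k \<in> N \<Longrightarrow> prio k < p \<longleftrightarrow> prio k - 1 < p - 1"
    using prio_range assms by fastforce
  ultimately show ?thesis unfolding J_def A_def rho_def by auto
qed

lemma rho_greedy: "greedy M rho"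
  unfolding greedy_def
proof (intro ballI conjI)
  fix z assume zN: "z \<in> N"
  let ?r0 = "(prio z - 1) mod m"
  have r0: "?r0 < m" using mpos by simp
  show "rho z \<in> M" unfolding rho_def using e_bij r0 by (auto simp: bij_betw_def)
  fix j assume jM: "j \<in> M"
  then have "j \<in> e ` {0..<m}" using e_bij by (simp add: bij_betw_def)
  then obtain r where r: "r < m" "j = e r" by auto
  have p1: "prio z \<ge> 1" "prio z - 1 \<le> n" using prio_range[OF zN] by arith+
  let ?P = "prio z - 1"
  have "V (J rho (rho z) (prio z)) = W ?r0 (?P div m)"
    unfolding rho_def J_rho[OF r0 p1(1)] V_A[OF r0 p1(2)] by simp
  moreover have "V (J rho j (prio z)) = W r (?P div m + (if r < ?r0 then 1 else 0))"
    unfolding r J_rho[OF r(1) p1(1)] V_A[OF r(1) p1(2)] by simp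
  moreover have "W ?r0 (?P div m) \<le> W r (?P div m + (if r < ?r0 then 1 else 0))"
  proof (cases "r < ?r0")
    case True
    have "W ?r0 (?P div m) \<le> W (r + m) (?P div m)" using r0 by (intro W_mono) simp
    also have "\<dots> \<le> W r (Suc (?P div m))" by (rule W_shift)
    finally show ?thesis using True by simp
  next
    case False
    then show ?thesis by (simp add: W_mono)
  qed
  ultimately show "V (J rho (rho z) (prio z)) \<le> V (J rho j (prio z))" by simp
qed

end


lemma prefix_sum:
  fixes f :: "'a \<Rightarrow> real"
  assumes "finite R" "finite F" "card F \<le> card R"
    and "\<forall>x\<in>R-F. \<forall>y\<in>F-R. f y \<le> f x" and "\<forall>x\<in>F \<union> R. f x \<ge> 0"
  shows "sum f F \<le> sum f R"
proof -
  have eF: "F = (F \<inter> R) \<union> (F - R)" by blast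
  have eR: "R = (F \<inter> R) \<union> (R - F)" by blast
  have cF: "card F = card (F \<inter> R) + card (F - R)"
    using assms(2) by (subst eF, subst card_Un_disjoint) auto
  have cR: "card R = card (F \<inter> R) + card (R - F)"
    using assms(1) by (subst eR, subst card_Un_disjoint) auto
  have cc: "card (F - R) \<le> card (R - F)" using cF cR assms(3) by simp
  have sF: "sum f F = sum f (F \<inter> R) + sum f (F - R)"
    using assms(2) by (subst eF, subst sum.union_disjoint) auto
  have sR: "sum f R = sum f (F \<inter> R) + sum f (R - F)"
    using assms(1) by (subst eR, subst sum.union_disjoint) auto
  have "sum f (F - R) \<le> sum f (R - F)"
  proof (cases "F - R = {}")
    case True
    have "sum f (R - F) \<ge> 0"
    proof (cases "R - F = {}")
      case True then show ?thesis unfolding True by simp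
    next
      case False
      have "\<forall>x\<in>R-F. f x \<ge> 0" using assms(5) by blast
      then show ?thesis by (intro sum_nonneg) blast
    qed
    then show ?thesis unfolding True by simp
  next
    case False
    define c where "c = Max (f ` (F - R))"
    have fin1: "finite (F - R)" "finite (R - F)" using assms(1,2) by auto
    have c1: "\<forall>y\<in>F-R. f y \<le> c" unfolding c_def using fin1 by auto
    have c0: "c \<ge> 0"
    proof -
      obtain y where y: "y \<in> F - R" using False by blast
      then have "f y \<le> c" "f y \<ge> 0" using c1 assms(5) by auto
      then show ?thesis by linarith
    qed
    have c2: "\<forall>x\<in>R-F. c \<le> f x"
    proof
      fix x assume x: "x \<in> R - F"
      have "c \<in> f ` (F - R)" unfolding c_def using fin1 False by (intro Max_in) auto
      then show "c \<le> f x" using assms(4) x by auto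
    qed
    have "sum f (F - R) \<le> of_nat (card (F - R)) * c"
      using sum_bounded_above[of "F - R" f c] c1 by simp
    also have "\<dots> \<le> of_nat (card (R - F)) * c"
      using cc c0 by (simp add: mult_right_mono)
    also have "\<dots> \<le> sum f (R - F)"
      using sum_bounded_below[of "R - F" c f] c2 by simp
    finally show ?thesis .
  qed
  then show ?thesis using sF sR by simp
qed


context sgM
begin

definition rk :: "('j \<Rightarrow> 'm) \<Rightarrow> 'j \<Rightarrow> nat" where
  "rk \<tau> k = card {l\<in>N. \<tau> l = \<tau> k \<and> prio k < prio l}"

lemma sumV_eq:
  assumes "\<forall>i\<in>N. \<tau> i \<in> M"
  shows "(\<Sum>j\<in>M. V (J \<tau> j (Suc n))) = (\<Sum>k\<in>N. b k * q ^ rk \<tau> k)"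
proof -
  have Jf: "\<And>j. J \<tau> j (Suc n) = {k\<in>N. \<tau> k = j}"
    using prio_range by (auto simp: J_def less_Suc_eq_le)
  have "\<And>j. V (J \<tau> j (Suc n)) = (\<Sum>k\<in>{k\<in>N. \<tau> k = j}. b k * q ^ rk \<tau> k)"
  proof -
    fix j
    show "V (J \<tau> j (Suc n)) = (\<Sum>k\<in>{k\<in>N. \<tau> k = j}. b k * q ^ rk \<tau> k)"
      unfolding Jf V_def
    proof (intro sum.cong refl)
      fix k assume "k \<in> {k\<in>N. \<tau> k = j}"
      then have "{l\<in>{k\<in>N. \<tau> k = j}. prio k < prio l} = {l\<in>N. \<tau> l = \<tau> k \<and> prio k < prio l}" by auto
      then show "b k * q ^ card {l\<in>{k\<in>N. \<tau> k = j}. prio k < prio l} = b k * q ^ rk \<tau> k"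
        by (simp add: rk_def)
    qed
  qed
  then have "(\<Sum>j\<in>M. V (J \<tau> j (Suc n))) = (\<Sum>j\<in>M. \<Sum>k\<in>{k\<in>N. \<tau> k = j}. b k * q ^ rk \<tau> k)"
    by simp
  also have "\<dots> = (\<Sum>k\<in>N. b k * q ^ rk \<tau> k)"
    by (rule sum.group[OF finN finM]) (use assms in auto)
  finally show ?thesis .
qed

lemma geom: "q ^ r = 1 + a * (\<Sum>u<r. q ^ u)"
proof (induction r)
  case 0 then show ?case by simp
next
  case (Suc r)
  have "q ^ Suc r = q ^ r + a * q ^ r" by (simp add: q_def algebra_simps)
  then show ?case using Suc by (simp add: algebra_simps)
qed

lemma rk_lt: "k \<in> N \<Longrightarrow> rk \<tau> k < n"
proof -
  assume k: "k \<in> N"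
  have "{l\<in>N. \<tau> l = \<tau> k \<and> prio k < prio l} \<subseteq> N - {k}" by auto
  then have "rk \<tau> k \<le> card (N - {k})" unfolding rk_def using finN by (intro card_mono) auto
  also have "\<dots> < n" using k finN npos by simp
  finally show ?thesis .
qed

definition G :: "('j \<Rightarrow> 'm) \<Rightarrow> nat \<Rightarrow> real" where
  "G \<tau> u = (\<Sum>k\<in>{k\<in>N. u < rk \<tau> k}. b k)"

lemma decomp:
  "(\<Sum>k\<in>N. b k * q ^ rk \<tau> k) = (\<Sum>k\<in>N. b k) + a * (\<Sum>u<n. q ^ u * G \<tau> u)"
proof -
  have "(\<Sum>k\<in>N. b k * q ^ rk \<tau> k) = (\<Sum>k\<in>N. b k + a * (\<Sum>u<n. if u < rk \<tau> k then b k * q ^ u else 0))"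
  proof (intro sum.cong refl)
    fix k assume k: "k \<in> N"
    have "(\<Sum>u<n. if u < rk \<tau> k then b k * q ^ u else 0) = (\<Sum>u\<in>{u\<in>{..<n}. u < rk \<tau> k}. b k * q ^ u)"
      by (rule sum.inter_filter[symmetric]) simp
    also have "{u\<in>{..<n}. u < rk \<tau> k} = {..<rk \<tau> k}" using rk_lt[OF k, of \<tau>] by auto
    finally have "(\<Sum>u<n. if u < rk \<tau> k then b k * q ^ u else 0) = b k * (\<Sum>u<rk \<tau> k. q ^ u)"
      by (simp add: sum_distrib_left)
    then show "b k * q ^ rk \<tau> k = b k + a * (\<Sum>u<n. if u < rk \<tau> k then b k * q ^ u else 0)"
      by (subst geom) (simp add: algebra_simps)
  qed
  also have "\<dots> = (\<Sum>k\<in>N. b k) + a * (\<Sum>k\<in>N. \<Sum>u<n. if u < rk \<tau> k then b k * q ^ u else 0)"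
    by (simp add: sum.distrib sum_distrib_left)
  also have "(\<Sum>k\<in>N. \<Sum>u<n. if u < rk \<tau> k then b k * q ^ u else 0)
      = (\<Sum>u<n. \<Sum>k\<in>N. if u < rk \<tau> k then b k * q ^ u else 0)"
    by (rule sum.swap)
  also have "\<dots> = (\<Sum>u<n. q ^ u * G \<tau> u)"
  proof (intro sum.cong refl)
    fix u
    show "(\<Sum>k\<in>N. if u < rk \<tau> k then b k * q ^ u else 0) = q ^ u * G \<tau> u"
      unfolding G_def using finN by (simp add: sum.inter_filter sum_distrib_left mult.commute, intro sum.cong refl, simp)
  qed
  finally show ?thesis .
qed


lemma rk_strict:
  assumes "k \<in> N" "k' \<in> N" "\<tau> k = \<tau> k'" "prio k < prio k'"
  shows "rk \<tau> k' < rk \<tau> k"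
proof -
  have "{l\<in>N. \<tau> l = \<tau> k' \<and> prio k' < prio l} \<subset> {l\<in>N. \<tau> l = \<tau> k \<and> prio k < prio l}"
    using assms by auto
  then show ?thesis unfolding rk_def using finN by (intro psubset_card_mono) auto
qed

lemma card_small:
  assumes "\<forall>i\<in>N. \<tau> i \<in> M"
  shows "card {k\<in>N. rk \<tau> k \<le> u} \<le> m * Suc u"
proof -
  have inj2: "inj_on (\<lambda>k. (\<tau> k, rk \<tau> k)) {k\<in>N. rk \<tau> k \<le> u}"
  proof (rule inj_onI)
    fix k k' assume k: "k \<in> {k\<in>N. rk \<tau> k \<le> u}" and k': "k' \<in> {k\<in>N. rk \<tau> k \<le> u}"
      and eq: "(\<tau> k, rk \<tau> k) = (\<tau> k', rk \<tau> k')"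
    show "k = k'"
    proof (rule ccontr)
      assume ne: "k \<noteq> k'"
      then have "prio k \<noteq> prio k'" using inj k k' by (auto dest: inj_onD)
      then consider "prio k < prio k'" | "prio k' < prio k" by linarith
      then show False
      proof cases
        case 1
        then have "rk \<tau> k' < rk \<tau> k" using k k' eq by (intro rk_strict) auto
        then show False using eq by simp
      next
        case 2
        then have "rk \<tau> k < rk \<tau> k'" using k k' eq by (intro rk_strict) auto
        then show False using eq by simp
      qed
    qed
  qed
  have "card {k\<in>N. rk \<tau> k \<le> u} \<le> card (M \<times> {..u})"
    by (rule card_inj_on_le[OF inj2]) (use assms finM in auto)
  also have "\<dots> = m * Suc u" by (simp add: card_cartesian_product)
  finally show ?thesis .
qed

lemma rho_mod: "l \<in> N \<Longrightarrow> k \<in> N \<Longrightarrow> rho l = rho k \<longleftrightarrow> (prio l - 1) mod m = (prio k - 1) mod m"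
  unfolding rho_def using e_inj mpos by simp

lemma rk_rho:
  assumes k: "k \<in> N"
  shows "rk rho k = (n - prio k) div m"
proof -
  let ?pk = "prio k" and ?d = "(n - prio k) div m"
  let ?S = "{l\<in>N. rho l = rho k \<and> prio k < prio l}"
  have pk: "1 \<le> ?pk" "?pk \<le> n" using prio_range[OF k] by auto
  have img: "prio ` ?S = (\<lambda>v. ?pk + m * v) ` {1..?d}"
  proof (intro set_eqI iffI)
    fix x assume "x \<in> prio ` ?S"
    then obtain l where l: "l \<in> N" "rho l = rho k" "?pk < prio l" "x = prio l" by auto
    have pl: "prio l \<le> n" using prio_range[OF l(1)] by simp
    have "(prio l - 1) mod m = (?pk - 1) mod m" using rho_mod l k by simp
    then have "m dvd (prio l - 1) - (?pk - 1)" using l(3) by (subst mod_eq_dvd_iff_nat[symmetric]) auto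
    moreover have "(prio l - 1) - (?pk - 1) = prio l - ?pk" using pk l(3) by simp
    ultimately obtain v where v: "prio l - ?pk = m * v" by (auto elim: dvdE)
    have v1: "v \<ge> 1" using v l(3) by (cases v) auto
    have "v * m \<le> n - ?pk" using v pl by (simp add: mult.commute)
    then have "v \<le> ?d" using mpos by (simp add: less_eq_div_iff_mult_less_eq)
    moreover have "x = ?pk + m * v" using v l(3,4) by simp
    ultimately show "x \<in> (\<lambda>v. ?pk + m * v) ` {1..?d}" using v1 by auto
  next
    fix x assume "x \<in> (\<lambda>v. ?pk + m * v) ` {1..?d}"
    then obtain v where v: "1 \<le> v" "v \<le> ?d" "x = ?pk + m * v" by auto
    have "v * m \<le> n - ?pk" using v(2) mpos by (simp add: less_eq_div_iff_mult_less_eq)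
    then have xn: "x \<le> n" using v(3) pk by (simp add: mult.commute)
    have xgt: "?pk < x" using v(1,3) mpos by simp
    have x1: "x \<in> {1..n}" using xn xgt by simp
    let ?l = "inv_into N prio x"
    have l: "?l \<in> N" "prio ?l = x" using inv_props[OF x1] by auto
    have "x - 1 = (?pk - 1) + m * v" using v(3) pk by simp
    then have "(x - 1) mod m = (?pk - 1) mod m" by simp
    then have "rho ?l = rho k" using rho_mod[OF l(1) k] l(2) by simp
    then show "x \<in> prio ` ?S" using l xgt by (auto intro!: image_eqI[where x = ?l])
  qed
  have "rk rho k = card (prio ` ?S)"
    unfolding rk_def by (rule card_image[symmetric]) (rule inj_on_subset[OF inj], auto)
  also have "\<dots> = card {1..?d}"
    unfolding img by (rule card_image) (use mpos in \<open>auto simp: inj_on_def\<close>)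
  finally show ?thesis by simp
qed

definition F :: "nat \<Rightarrow> 'j set" where "F u = {k\<in>N. prio k + m * Suc u \<le> n}"

lemma G_rho: "G rho u = (\<Sum>k\<in>F u. b k)"
proof -
  have "{k\<in>N. u < rk rho k} = F u"
  proof (intro set_eqI iffI)
    fix k assume "k \<in> {k\<in>N. u < rk rho k}"
    then have k: "k \<in> N" "Suc u \<le> (n - prio k) div m" using rk_rho by auto
    then have "Suc u * m \<le> n - prio k" using mpos by (simp add: less_eq_div_iff_mult_less_eq)
    then have "prio k + Suc u * m \<le> n" using prio_range[OF k(1)] by linarith
    then show "k \<in> F u" using k by (simp add: F_def mult.commute)
  next
    fix k assume "k \<in> F u"
    then have k: "k \<in> N" "prio k + m * Suc u \<le> n" by (auto simp: F_def)
    then have "Suc u * m \<le> n - prio k" by (simp add: mult.commute)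
    then have "Suc u \<le> (n - prio k) div m" using mpos by (simp add: less_eq_div_iff_mult_less_eq)
    then show "k \<in> {k\<in>N. u < rk rho k}" using k rk_rho by auto
  qed
  then show ?thesis by (simp add: G_def)
qed

lemma card_F: "card (F u) = n - m * Suc u"
proof -
  have "prio ` F u = {1..n - m * Suc u}"
  proof (intro set_eqI iffI)
    fix x assume "x \<in> prio ` F u"
    then obtain k where "k \<in> N" "prio k + m * Suc u \<le> n" "x = prio k" by (auto simp: F_def)
    then show "x \<in> {1..n - m * Suc u}" using prio_range by fastforce
  next
    fix x assume x: "x \<in> {1..n - m * Suc u}"
    then have x1: "x \<in> {1..n}" by auto
    have "inv_into N prio x \<in> F u" using inv_props[OF x1] x by (auto simp: F_def)
    then show "x \<in> prio ` F u" using inv_props[OF x1] by (metis image_eqI)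
  qed
  moreover have "card (prio ` F u) = card (F u)"
    by (rule card_image) (rule inj_on_subset[OF inj], auto simp: F_def)
  ultimately show ?thesis by simp
qed

lemma G_lower:
  assumes "\<forall>i\<in>N. \<tau> i \<in> M"
  shows "G rho u \<le> G \<tau> u"
proof -
  let ?R = "{k\<in>N. u < rk \<tau> k}"
  have "?R = N - {k\<in>N. rk \<tau> k \<le> u}" by auto
  then have "card ?R = n - card {k\<in>N. rk \<tau> k \<le> u}"
    using finN by (simp add: card_Diff_subset)
  then have cR: "card (F u) \<le> card ?R" using card_small[OF assms, of u] card_F[of u] by simp
  have "(\<Sum>k\<in>F u. b k) \<le> (\<Sum>k\<in>?R. b k)"
  proof (rule prefix_sum)
    show "finite ?R" "finite (F u)" using finN by (auto simp: F_def)
    show "card (F u) \<le> card ?R" by (rule cR)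
    show "\<forall>x\<in>?R - F u. \<forall>y\<in>F u - ?R. b y \<le> b x"
    proof (intro ballI)
      fix x y assume x: "x \<in> ?R - F u" and y: "y \<in> F u - ?R"
      then have "prio y < prio x" by (auto simp: F_def)
      then show "b y \<le> b x" using sortedb x y by (auto simp: F_def)
    qed
    show "\<forall>x\<in>F u \<union> ?R. b x \<ge> 0" using bnn by (auto simp: F_def)
  qed
  moreover have "G \<tau> u = (\<Sum>k\<in>?R. b k)" by (simp add: G_def)
  ultimately show ?thesis using G_rho[of u] by simp
qed

lemma lower:
  assumes "\<forall>i\<in>N. \<tau> i \<in> M"
  shows "(\<Sum>j\<in>M. V (J rho j (Suc n))) \<le> (\<Sum>j\<in>M. V (J \<tau> j (Suc n)))"
proof -
  have rM: "\<forall>i\<in>N. rho i \<in> M" using rho_greedy by (auto simp: greedy_def)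
  have "(\<Sum>u<n. q ^ u * G rho u) \<le> (\<Sum>u<n. q ^ u * G \<tau> u)"
    using G_lower[OF assms] q1 by (intro sum_mono mult_left_mono) auto
  then have "a * (\<Sum>u<n. q ^ u * G rho u) \<le> a * (\<Sum>u<n. q ^ u * G \<tau> u)"
    using apos by simp
  then show ?thesis unfolding sumV_eq[OF assms] sumV_eq[OF rM] decomp by simp
qed

end


theorem lemma19:
  fixes N :: "'j set" and M :: "'m set" and prio :: "'j \<Rightarrow> nat"
    and b :: "'j \<Rightarrow> real" and a :: real and s :: "'m \<Rightarrow> real" and sigma :: "'j \<Rightarrow> 'm"
  assumes "finite N" and "finite M" and "M \<noteq> {}"
    and "\<forall>j\<in>M. s j = 1"
    and "\<forall>i\<in>N. b i \<ge> 0" and "a > 0"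
    and "bij_betw prio N {1..card N}"
    and "\<forall>u\<in>N. \<forall>v\<in>N. prio u < prio v \<longrightarrow> b u \<le> b v"
    and "pure_NE N M prio (\<lambda>i t. b i + a * t) s sigma"
  shows "\<forall>sigma'. profile N M sigma' \<longrightarrow>
           total_processing_time N prio (\<lambda>i t. b i + a * t) s sigma
             \<le> total_processing_time N prio (\<lambda>i t. b i + a * t) s sigma'"
proof (intro allI impI)
  fix sigma' assume prof: "profile N M sigma'"
  show "total_processing_time N prio (\<lambda>i t. b i + a * t) s sigma
          \<le> total_processing_time N prio (\<lambda>i t. b i + a * t) s sigma'"
  proof (cases "N = {}")
    case True
    then show ?thesis by (simp add: total_processing_time_def)
  next
    case False
    obtain e where e: "bij_betw e {0..<card M} M" using ex_bij_betw_nat_finite[OF assms(2)] by blast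
    interpret sgM N prio b a M e
      using assms e False by unfold_locales auto
    have g: "greedy M sigma" by (rule NE_greedy[OF assms(9) assms(4)])
    have rM: "\<forall>i\<in>N. rho i \<in> M" using rho_greedy by (auto simp: greedy_def)
    have pM: "\<forall>i\<in>N. sigma' i \<in> M" using prof by (simp add: profile_def)
    have "total_processing_time N prio (\<lambda>i t. b i + a * t) s sigma
        = total_processing_time N prio (\<lambda>i t. b i + a * t) s rho"
      by (rule greedy_tpt_eq[OF g rho_greedy assms(2,4)])
    also have "\<dots> = (\<Sum>j\<in>M. V (J rho j (Suc n)))" by (rule tpt_eq[OF rM assms(2,4)])
    also have "\<dots> \<le> (\<Sum>j\<in>M. V (J sigma' j (Suc n)))" by (rule lower[OF pM])
    also have "\<dots> = total_processing_time N prio (\<lambda>i t. b i + a * t) s sigma'"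
      by (rule tpt_eq[OF pM assms(2,4), symmetric])
    finally show ?thesis .
  qed
qed

end
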